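(* Consider the planning procedure described in the context, run at commit times $t_0<t_1<\cdots<t_k<\cdots$ over the mission horizon $[t_0,t_f]$, and let $p^{\Omega_{\mathrm{com}}}_k$ be the tube trajectory committed at $t_k$. Define the solution as the concatenation of committed tubes $p^\Omega_{\mathrm{sol}}=\{p^{\Omega_{\mathrm{com}}}_0,p^{\Omega_{\mathrm{com}}}_1,\dots,p^{\Omega_{\mathrm{com}}}_k,\dots\}$. Assume the cost of the initial backup satisfies $J^{\mathrm{back}}_0\le B$. If at each $t_k$ the valid pairs are generated, the budget-feasible set $\mathcal{F}^c_k$ is formed, the commitment rule is applied, and the system tracks each committed tube, then the solution is safe, i.e. its tube lies in $\mathcal{S}(t)$ for all $t\in[t_0,t_f]$, and $J(p^\Omega_{\mathrm{sol}})\le B$.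
   Context: System: $\dot x=f_0(x)+F(x)\theta_f+(g_0(x)+G(x)\theta_g)u+n_{\mathrm{add}}(t)$, $y=c(x)+n_{\mathrm{meas}}(t)$, with state $x\in\mathcal{X}\subset\mathbb{R}^n$, input $u\in\mathcal{U}$, unknown parameters $\theta=(\theta_f,\theta_g)$ in a known compact set $\Theta$, and bounded disturbances. The safe set is $\mathcal{S}(t)\subseteq\mathcal{X}$, the goal set $\mathcal{G}$, the budget $B$, and the mission cost $J(p_x,p_u)=\int_{t_0}^{t_f}\ell(p_x,p_u)\,dt+\ell_T(p_x(t_f))$. A trajectory $p=(p_x,p_u)$ on $[t_i,t_f]$ satisfies the nominal dynamics with fixed parameter estimates. A tube cross-section $\mathcal{E}(t)$ is a compact set containing the origin that bounds the deviation of the true state from $p_x(t)$ for all parameters in $\Theta$ and all admissible disturbances; the tube is $\Omega(t)=p_x(t)\oplus\mathcal{E}(t)$. A robust controlled-invariant (RCI) tube trajectory $p^\Omega=(p_x,p_u,\Omega)$ satisfies tightened constraints $p_x(t)\in\mathcal{S}\ominus\mathcal{E}(t)$, $p_u(t)\in\mathcal{U}\ominus\Delta U(t)$, $p_x(t_f)\in\mathcal{G}\ominus\mathcal{E}(t_f)$, and admits an ancillary controller $u=p_u+\pi(t,x,p^\Omega)$ such that $x(t_i)\in\Omega(t_i)$ implies $x(t)\in\Omega(t)$ for all $t$ and all parameters/disturbances. Procedure at each $t_k$: (1) compute a backup RCI tube trajectory $p^{\Omega_{\mathrm{bak}}}_k$ on $[t_k,t_f]$ with $\Omega^{\mathrm{bak}}_k(t)\subseteq\mathcal{S}(t)$,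 built from the current parameter set $\Theta^k$. (2) For horizons $T^{c,k}_i=iT_c$, $i=1,\dots,N_k$ with $N_k=\max\{i: t_k+iT_c\le t_f\}$, the conservative candidate $p^{\Omega_{\mathrm{cons}},i}_k$ is the backup restricted to $[t_k,t_k+T^{c,k}_i]$, and an informative candidate $p^{\mathrm{info},i}_k$ is a trajectory on this interval ending at $p^{\mathrm{cons},i}_{k,x}(t_k+T^{c,k}_i)$. The pair is valid if there is a tube $\Omega^{\mathrm{info},i}_k=p^{\mathrm{info},i}_{k,x}\oplus\mathcal{E}^{\mathrm{info},i}_k$ making $p^{\Omega_{\mathrm{info}},i}_k$ an RCI tube trajectory with $\Omega^{\mathrm{info},i}_k(t)\subseteq\mathcal{S}\ominus\mathcal{E}(t)$ and $p^{\mathrm{info},i}_{k,u}(t)\in\mathcal{U}\ominus\Delta U(t)$ on the horizon. (3) With $J^k_{\mathrm{exec}}$ the cost of the executed trajectory up to $t_k$, $J^k_{\mathrm{back}}$ the cost of the backup from $t_k$ to $t_f$, and $\Delta J_i=J(p^{\Omega_{\mathrm{info}},i}_k)-J(p^{\Omega_{\mathrm{cons}},i}_k)$, the feasible set is $\mathcal{F}^c_k=\{i:\text{pair }i\text{ valid},\ J^k_{\mathrm{exec}}+J^k_{\mathrm{back}}+\Delta J_i\le B\}$. (4) If $\mathcal{F}^c_k\neq\emptyset$, commit the informative tube of the pair maximizing the score $s^{c,k}_i=e^{-\lambda T^{c,k}_i}\Delta w_i$ ($\lambda>0$, $\Delta w_i$ the predicted reduction in average directional width of the parameter set); otherwise commit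 the conservative candidate with the smallest horizon. After execution the parameter set is updated by set-membership identification $\Theta^{k+1}=\Theta^k\cap\{\theta:|z(t)-\Phi(x(t),u(t))\theta|\le\overline w\}$ (so it is non-increasing and contains the true parameter), and the backup is recomputed. Standing assumptions: the executed trajectory equals the planned committed trajectory, measurements satisfy $z_j=\Phi_j\theta^\star+w_j$ with $\|w_j\|_\infty\le\overline w$; and tube cost is monotone under set inclusion: if $\Theta'\subseteq\Theta$, the RCI tube trajectory computed from $\Theta'$ on $[t_k,t_f]$ has cost no larger than the one computed from $\Theta$. *)

theory Defs
  imports "HOL-Analysis.Analysis"
begin

text \<open>Dynamics xdot = f0 x + F x thf + (g0 x + G x thg) u + n_add, with
  x :: real^'n, u :: real^'m, thf :: real^'a, thg :: real^'b.  F x is an n x a matrix;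
  G x thg is the n x m matrix  sum_j thg_j G_j(x)  (linear in thg).\<close>

record ('n,'m,'a,'b) sysdata =
  f0 :: "real^'n \<Rightarrow> real^'n"
  Fm :: "real^'n \<Rightarrow> real^'a^'n"
  g0 :: "real^'n \<Rightarrow> real^'m^'n"
  Gm :: "real^'n \<Rightarrow> (real^'m^'n)^'b"
  Nadd :: "(real^'n) set"

definition dyn ::
  "('n::finite,'m::finite,'a::finite,'b::finite) sysdata \<Rightarrow> real^'n \<Rightarrow> ((real^'a) \<times> (real^'b))
     \<Rightarrow> real^'m \<Rightarrow> real^'n" where
  "dyn sy x \<theta> u =
     f0 sy x + Fm sy x *v fst \<theta> + (g0 sy x + (\<Sum>j\<in>UNIV. (snd \<theta> $ j) *\<^sub>R (Gm sy x $ j))) *v u"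

definition mink_diff :: "'a::ab_group_add set \<Rightarrow> 'a set \<Rightarrow> 'a set" where
  "mink_diff A B = {x. \<forall>b\<in>B. x + b \<in> A}"

definition mink_sum_pt :: "'a::ab_group_add \<Rightarrow> 'a set \<Rightarrow> 'a set" where
  "mink_sum_pt p E = (\<lambda>e. p + e) ` E"

text \<open>A tube trajectory: nominal state p_x, nominal input p_u, cross-section E(t) and
  the input tightening set Delta U(t).  Its tube is Omega(t) = p_x(t) + E(t).\<close>

record ('n,'m) tubetraj =
  tx :: "real \<Rightarrow> real^'n"
  tu :: "real \<Rightarrow> real^'m"
  tE :: "real \<Rightarrow> (real^'n) set"
  tdU :: "real \<Rightarrow> (real^'m) set"

definition tube :: "('n::finite,'m::finite,'z) tubetraj_scheme \<Rightarrow> real \<Rightarrow> (real^'n) set" where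
  "tube p t = mink_sum_pt (tx p t) (tE p t)"

definition nominal_traj ::
  "('n::finite,'m::finite,'a::finite,'b::finite) sysdata \<Rightarrow> ((real^'a) \<times> (real^'b)) \<Rightarrow> real \<Rightarrow> real
     \<Rightarrow> (real \<Rightarrow> real^'n) \<Rightarrow> (real \<Rightarrow> real^'m) \<Rightarrow> bool" where
  "nominal_traj sy thh a b px pu \<longleftrightarrow> a \<le> b \<and>
     (\<forall>t\<in>{a..b}. (px has_vector_derivative dyn sy (px t) thh (pu t)) (at t within {a..b}))"

text \<open>Robust controlled-invariant tube trajectory on [a,b] for the parameter set Th
  (safe set S(t), input set U, goal set Gs, mission final time tf).\<close>
definition rci_tube ::
  "('n::finite,'m::finite,'a::finite,'b::finite) sysdata \<Rightarrow> ((real^'a) \<times> (real^'b)) set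
    \<Rightarrow> ((real^'a) \<times> (real^'b)) \<Rightarrow> (real \<Rightarrow> (real^'n) set) \<Rightarrow> (real^'m) set \<Rightarrow> (real^'n) set
    \<Rightarrow> real \<Rightarrow> real \<Rightarrow> real \<Rightarrow> ('n,'m) tubetraj \<Rightarrow> bool" where
  "rci_tube sy Th thh S U Gs tf a b p \<longleftrightarrow>
     nominal_traj sy thh a b (tx p) (tu p) \<and>
     (\<forall>t\<in>{a..b}. compact (tE p t) \<and> 0 \<in> tE p t \<and>
        tx p t \<in> mink_diff (S t) (tE p t) \<and> tu p t \<in> mink_diff U (tdU p t)) \<and>
     (b = tf \<longrightarrow> tx p tf \<in> mink_diff Gs (tE p tf)) \<and>
     (\<exists>\<pi> :: real \<Rightarrow> real^'n \<Rightarrow> real^'m.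
        \<forall>\<theta>\<in>Th. \<forall>(nd :: real \<Rightarrow> real^'n) (x :: real \<Rightarrow> real^'n).
          (\<forall>t\<in>{a..b}. nd t \<in> Nadd sy) \<longrightarrow>
          (\<forall>t\<in>{a..b}. (x has_vector_derivative
              (dyn sy (x t) \<theta> (tu p t + \<pi> t (x t)) + nd t)) (at t within {a..b})) \<longrightarrow>
          x a \<in> tube p a \<longrightarrow> (\<forall>t\<in>{a..b}. x t \<in> tube p t))"

definition traj_cost ::
  "(real^'n::finite \<Rightarrow> real^'m::finite \<Rightarrow> real) \<Rightarrow> (real^'n \<Rightarrow> real) \<Rightarrow> real \<Rightarrow> real \<Rightarrow> real
     \<Rightarrow> (real \<Rightarrow> real^'n) \<Rightarrow> (real \<Rightarrow> real^'m) \<Rightarrow> real" where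
  "traj_cost l lT tf a b px pu =
     integral {a..b} (\<lambda>t. l (px t) (pu t)) + (if b = tf then lT (px b) else 0)"

definition num_horizons :: "real \<Rightarrow> real \<Rightarrow> real \<Rightarrow> nat" where
  "num_horizons tf Tc tk = Max {i::nat. tk + real i * Tc \<le> tf}"

text \<open>Validity of the pair (conservative = backup pb restricted to [tk, tk+T],
  informative = pinfo on [tk, tk+T]).\<close>
definition valid_pair ::
  "('n::finite,'m::finite,'a::finite,'b::finite) sysdata \<Rightarrow> ((real^'a) \<times> (real^'b)) set
    \<Rightarrow> ((real^'a) \<times> (real^'b)) \<Rightarrow> (real \<Rightarrow> (real^'n) set) \<Rightarrow> (real^'m) set \<Rightarrow> (real^'n) set
    \<Rightarrow> real \<Rightarrow> real \<Rightarrow> real \<Rightarrow> ('n,'m) tubetraj \<Rightarrow> ('n,'m) tubetraj \<Rightarrow> bool" where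
  "valid_pair sy Th thh S U Gs tf tk T pb pinfo \<longleftrightarrow>
     tx pinfo (tk + T) = tx pb (tk + T) \<and>
     rci_tube sy Th thh S U Gs tf tk (tk + T) pinfo \<and>
     (\<forall>t\<in>{tk..tk+T}. tube pinfo t \<subseteq> mink_diff (S t) (tE pinfo t) \<and>
        tu pinfo t \<in> mink_diff U (tdU pinfo t))"


definition delta_cost ::
  "(real^'n::finite \<Rightarrow> real^'m::finite \<Rightarrow> real) \<Rightarrow> (real^'n \<Rightarrow> real) \<Rightarrow> real \<Rightarrow> real \<Rightarrow> real
     \<Rightarrow> ('n,'m) tubetraj \<Rightarrow> ('n,'m) tubetraj \<Rightarrow> real" where
  "delta_cost l lT tf tk T pinfo pb =
     traj_cost l lT tf tk (tk + T) (tx pinfo) (tu pinfo) - traj_cost l lT tf tk (tk + T) (tx pb) (tu pb)"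

text \<open>Budget-feasible set F^c_k, given J_exec^k (Jex), the backup pb at tk and the informative
  candidates infos i for horizons i*Tc, i = 1..N_k.\<close>
definition feasible_set ::
  "('n::finite,'m::finite,'a::finite,'b::finite) sysdata \<Rightarrow> ((real^'a) \<times> (real^'b)) set
    \<Rightarrow> ((real^'a) \<times> (real^'b)) \<Rightarrow> (real \<Rightarrow> (real^'n) set) \<Rightarrow> (real^'m) set \<Rightarrow> (real^'n) set
    \<Rightarrow> (real^'n \<Rightarrow> real^'m \<Rightarrow> real) \<Rightarrow> (real^'n \<Rightarrow> real) \<Rightarrow> real \<Rightarrow> real \<Rightarrow> real
    \<Rightarrow> real \<Rightarrow> real \<Rightarrow> ('n,'m) tubetraj \<Rightarrow> (nat \<Rightarrow> ('n,'m) tubetraj) \<Rightarrow> nat set" where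
  "feasible_set sy Th thh S U Gs l lT tf Tc B Jex tk pb infos =
     {i \<in> {1..num_horizons tf Tc tk}.
        valid_pair sy Th thh S U Gs tf tk (real i * Tc) pb (infos i) \<and>
        Jex + traj_cost l lT tf tk tf (tx pb) (tu pb)
            + delta_cost l lT tf tk (real i * Tc) (infos i) pb \<le> B}"

text \<open>Index of the committed piece active at time s (commit times tt 0 < ... < tt K = tf):
  piece k on [tt k, tt (k+1)), the last piece also at tf.\<close>
definition seg_index :: "(nat \<Rightarrow> real) \<Rightarrow> nat \<Rightarrow> real \<Rightarrow> nat" where
  "seg_index tt K s = (if s < tt K then (LEAST k. s < tt (Suc k)) else K - 1)"

definition sol_x :: "(nat \<Rightarrow> ('n::finite,'m::finite) tubetraj) \<Rightarrow> (nat \<Rightarrow> real) \<Rightarrow> nat \<Rightarrow> real \<Rightarrow> real^'n" where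
  "sol_x com tt K s = tx (com (seg_index tt K s)) s"

definition sol_u :: "(nat \<Rightarrow> ('n::finite,'m::finite) tubetraj) \<Rightarrow> (nat \<Rightarrow> real) \<Rightarrow> nat \<Rightarrow> real \<Rightarrow> real^'m" where
  "sol_u com tt K s = tu (com (seg_index tt K s)) s"

definition sol_tube :: "(nat \<Rightarrow> ('n::finite,'m::finite) tubetraj) \<Rightarrow> (nat \<Rightarrow> real) \<Rightarrow> nat \<Rightarrow> real \<Rightarrow> (real^'n) set" where
  "sol_tube com tt K s = tube (com (seg_index tt K s)) s"

definition exec_cost ::
  "(real^'n \<Rightarrow> real^'m \<Rightarrow> real) \<Rightarrow> (nat \<Rightarrow> ('n::finite,'m::finite) tubetraj) \<Rightarrow> (nat \<Rightarrow> real) \<Rightarrow> nat \<Rightarrow> nat \<Rightarrow> real" where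
  "exec_cost l com tt K k = integral {tt 0..tt k} (\<lambda>s. l (sol_x com tt K s) (sol_u com tt K s))"

end

theory Submission
  imports Defs
begin


lemma t_mono:
  assumes "\<forall>k<K. (t::nat\<Rightarrow>real) k < t (Suc k)" "i \<le> j" "j \<le> K"
  shows "t i \<le> t j"
  using assms(2,3)
proof (induction j)
  case 0 then show ?case by simp
next
  case (Suc j)
  show ?case
  proof (cases "i = Suc j")
    case False
    then have "t i \<le> t j" using Suc by simp
    also have "t j \<le> t (Suc j)" using assms(1) Suc.prems by (simp add: less_imp_le)
    finally show ?thesis .
  qed simp
qed

lemma seg_eq:
  assumes m: "\<forall>k<K. (t::nat\<Rightarrow>real) k < t (Suc k)" and "k < K" "t k \<le> s" "s < t (Suc k)"
  shows "seg_index t K s = k"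
proof -
  have "t (Suc k) \<le> t K" using t_mono[OF m, of "Suc k" K] assms by simp
  then have sK: "s < t K" using assms by simp
  have "(LEAST j. s < t (Suc j)) = k"
  proof (rule Least_equality)
    show "s < t (Suc k)" by fact
  next
    fix y assume y: "s < t (Suc y)"
    show "k \<le> y"
    proof (rule ccontr)
      assume "\<not> k \<le> y"
      then have "t (Suc y) \<le> t k" using t_mono[OF m, of "Suc y" k] assms by simp
      then show False using y assms by simp
    qed
  qed
  then show ?thesis unfolding seg_index_def using sK by simp
qed

lemma find_seg:
  assumes "t 0 \<le> s" "s < (t::nat\<Rightarrow>real) n"
  shows "\<exists>k<n. t k \<le> s \<and> s < t (Suc k)"
  using assms(2)
proof (induction n)
  case 0 then show ?case using assms(1) by simp
next
  case (Suc n)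
  show ?case
  proof (cases "s < t n")
    case True then show ?thesis using Suc by (meson less_SucI)
  next
    case False then show ?thesis using Suc.prems by (intro exI[of _ n]) auto
  qed
qed

lemma seg_cover:
  assumes m: "\<forall>k<K. (t::nat\<Rightarrow>real) k < t (Suc k)" and "t 0 \<le> s" "s \<le> t K" "0 < K"
  shows "\<exists>k<K. t k \<le> s \<and> s \<le> t (Suc k) \<and> seg_index t K s = k"
proof (cases "s = t K")
  case True
  have "t (K-1) \<le> t K" using t_mono[OF m, of "K-1" K] by simp
  then show ?thesis using True assms(4) by (intro exI[of _ "K-1"]) (auto simp: seg_index_def)
next
  case False
  then have "s < t K" using assms by simp
  then obtain k where "k<K" "t k \<le> s" "s < t (Suc k)" using find_seg[of t s K] assms(2) by blast
  then show ?thesis using seg_eq[OF m] by (intro exI[of _ k]) auto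
qed

lemma mink_diff_sub: "0 \<in> B \<Longrightarrow> mink_diff A B \<subseteq> A"
  unfolding mink_diff_def by force


theorem theorem1:
  fixes sy :: "('n::finite,'m::finite,'a::finite,'b::finite) sysdata"
    and S :: "real \<Rightarrow> (real^'n) set" and U :: "(real^'m) set" and Gs :: "(real^'n) set"
    and l :: "real^'n \<Rightarrow> real^'m \<Rightarrow> real" and lT :: "real^'n \<Rightarrow> real"
    and B t0 tf Tc lam wbar :: real
    and \<Theta> :: "((real^'a) \<times> (real^'b)) set" and \<theta>star :: "(real^'a) \<times> (real^'b)"
    and Phif :: "real^'n \<Rightarrow> real^'m \<Rightarrow> real^'a^'q::finite"
    and Phig :: "real^'n \<Rightarrow> real^'m \<Rightarrow> real^'b^'q"
    and K :: nat and t :: "nat \<Rightarrow> real"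
    and Th :: "nat \<Rightarrow> ((real^'a) \<times> (real^'b)) set" and thh :: "nat \<Rightarrow> (real^'a) \<times> (real^'b)"
    and bak :: "nat \<Rightarrow> ('n,'m) tubetraj" and info :: "nat \<Rightarrow> nat \<Rightarrow> ('n,'m) tubetraj"
    and com :: "nat \<Rightarrow> ('n,'m) tubetraj" and dw :: "nat \<Rightarrow> nat \<Rightarrow> real"
    and xs :: "real \<Rightarrow> real^'n" and us :: "real \<Rightarrow> real^'m"
    and nd :: "real \<Rightarrow> real^'n" and z :: "real \<Rightarrow> real^'q" and w :: "real \<Rightarrow> real^'q"
  defines "N \<equiv> \<lambda>k. num_horizons tf Tc (t k)"
    and "Fc \<equiv> \<lambda>k. feasible_set sy (Th k) (thh k) S U Gs l lT tf Tc B (exec_cost l com t K k)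
                       (t k) (bak k) (info k)"
    and "score \<equiv> \<lambda>k i. exp (- lam * (real i * Tc)) * dw k i"
  assumes Tc_pos: "Tc > 0" and lam_pos: "lam > 0" and t0_lt: "t0 < tf"
    and Nadd_bdd: "bounded (Nadd sy)"
    and Theta: "compact \<Theta>" "\<theta>star \<in> \<Theta>" "Th 0 = \<Theta>"
    and times: "t 0 = t0" "t K = tf" "\<forall>k<K. t k < t (Suc k)"
    and integrable_bak: "\<forall>k<K. (\<lambda>s. l (tx (bak k) s) (tu (bak k) s)) integrable_on {t k..tf}"
    and integrable_info: "\<forall>k<K. \<forall>i\<in>{1..N k}.
          (\<lambda>s. l (tx (info k i) s) (tu (info k i) s)) integrable_on {t k..t k + real i * Tc}"
    and backup: "\<forall>k<K. rci_tube sy (Th k) (thh k) S U Gs tf (t k) tf (bak k)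
                        \<and> (\<forall>s\<in>{t k..tf}. tube (bak k) s \<subseteq> S s)"
    and backup0_budget: "traj_cost l lT tf t0 tf (tx (bak 0)) (tu (bak 0)) \<le> B"
    and commit_info: "\<forall>k<K. Fc k \<noteq> {} \<longrightarrow>
          (\<exists>i\<in>Fc k. (\<forall>j\<in>Fc k. score k j \<le> score k i) \<and> com k = info k i
                      \<and> t (Suc k) = t k + real i * Tc)"
    and commit_cons: "\<forall>k<K. Fc k = {} \<longrightarrow> com k = bak k \<and> t (Suc k) = t k + Tc"
    and noise: "\<forall>s\<in>{t0..tf}. z s = Phif (xs s) (us s) *v fst \<theta>star + Phig (xs s) (us s) *v snd \<theta>star + w s
                        \<and> infnorm (w s) \<le> wbar"
    and update: "\<forall>k<K. Th (Suc k) = Th k \<inter>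
          {\<theta>. \<forall>s\<in>{t k..t (Suc k)}. infnorm (z s - (Phif (xs s) (us s) *v fst \<theta> + Phig (xs s) (us s) *v snd \<theta>)) \<le> wbar}"
    and tracking: "\<forall>s\<in>{t0..tf}. nd s \<in> Nadd sy \<and> xs s \<in> sol_tube com t K s
          \<and> (xs has_vector_derivative dyn sy (xs s) \<theta>star (us s) + nd s) (at s within {t0..tf})"
    and cost_mono: "\<forall>k. Suc k < K \<longrightarrow>
          traj_cost l lT tf (t (Suc k)) tf (tx (bak (Suc k))) (tu (bak (Suc k)))
            \<le> traj_cost l lT tf (t (Suc k)) tf (tx (bak k)) (tu (bak k))"
  shows "(\<forall>s\<in>{t0..tf}. sol_tube com t K s \<subseteq> S s)
       \<and> traj_cost l lT tf t0 tf (sol_x com t K) (sol_u com t K) \<le> B"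
proof -
  have m: "\<forall>k<K. t k < t (Suc k)" using times(3) .
  have K0: "0 < K" using times t0_lt by (cases K) auto
  have tSuc_le: "t (Suc k) \<le> tf" if "k < K" for k
    using t_mono[OF m, of "Suc k" K] times(2) that by simp
  have tk_ge: "t0 \<le> t k" if "k \<le> K" for k
    using t_mono[OF m, of 0 k] times(1) that by simp
  define g where "g k s = l (tx (com k) s) (tu (com k) s)" for k s
  define gb where "gb k s = l (tx (bak k) s) (tu (bak k) s)" for k s
  define f where "f s = l (sol_x com t K s) (sol_u com t K s)" for s
  define E where "E k = exec_cost l com t K k" for k
  have E_eq: "E k = integral {t0..t k} f" for k
    unfolding E_def exec_cost_def f_def times(1) ..
  define Jb where "Jb k c = traj_cost l lT tf c tf (tx (bak k)) (tu (bak k))" for k c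
  have Jb_eq: "Jb k c = integral {c..tf} (gb k) + lT (tx (bak k) tf)" for k c
    unfolding Jb_def traj_cost_def gb_def by simp
  have piece: "(\<forall>s\<in>{t k..t (Suc k)}. tube (com k) s \<subseteq> S s)
      \<and> g k integrable_on {t k..t (Suc k)}
      \<and> tx (com k) (t (Suc k)) = tx (bak k) (t (Suc k))
      \<and> (E k + Jb k (t k) \<le> B \<longrightarrow> E k + integral {t k..t (Suc k)} (g k) + Jb k (t (Suc k)) \<le> B)"
    if kK: "k < K" for k
  proof (cases "Fc k = {}")
    case True
    then have ck: "com k = bak k" and tS: "t (Suc k) = t k + Tc" using commit_cons kK by auto
    have bk: "rci_tube sy (Th k) (thh k) S U Gs tf (t k) tf (bak k)"
      "\<forall>s\<in>{t k..tf}. tube (bak k) s \<subseteq> S s" using backup kK by auto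
    have le: "t k \<le> t (Suc k)" "t (Suc k) \<le> tf" using m kK tSuc_le by (auto simp: less_imp_le)
    have s1: "\<forall>s\<in>{t k..t (Suc k)}. tube (com k) s \<subseteq> S s" using bk(2) le ck by auto
    have ib: "gb k integrable_on {t k..tf}" using integrable_bak kK unfolding gb_def by auto
    then have s2: "g k integrable_on {t k..t (Suc k)}" unfolding g_def gb_def ck
      by (rule integrable_subinterval_real) (use le in auto)
    have "integral {t k..t (Suc k)} (gb k) + integral {t (Suc k)..tf} (gb k) = integral {t k..tf} (gb k)"
      using Henstock_Kurzweil_Integration.integral_combine[OF le ib] .
    then have "E k + integral {t k..t (Suc k)} (g k) + Jb k (t (Suc k)) = E k + Jb k (t k)"
      unfolding Jb_eq g_def gb_def ck by simp
    then show ?thesis using s1 s2 ck by simp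
  next
    case False
    then obtain i where iF: "i \<in> Fc k" and ci: "com k = info k i"
      and tS: "t (Suc k) = t k + real i * Tc" using commit_info kK by blast
    have iN: "i \<in> {1..N k}"
      and vp: "valid_pair sy (Th k) (thh k) S U Gs tf (t k) (real i * Tc) (bak k) (info k i)"
      and bud: "E k + traj_cost l lT tf (t k) tf (tx (bak k)) (tu (bak k))
            + delta_cost l lT tf (t k) (real i * Tc) (info k i) (bak k) \<le> B"
      using iF unfolding Fc_def feasible_set_def N_def E_def by auto
    have le: "t k \<le> t (Suc k)" "t (Suc k) \<le> tf" using m kK tSuc_le by (auto simp: less_imp_le)
    from vp have eqx: "tx (info k i) (t (Suc k)) = tx (bak k) (t (Suc k))"
      and rt: "rci_tube sy (Th k) (thh k) S U Gs tf (t k) (t (Suc k)) (info k i)"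
      and tsub: "\<forall>s\<in>{t k..t (Suc k)}. tube (info k i) s \<subseteq> mink_diff (S s) (tE (info k i) s)"
      unfolding valid_pair_def tS by auto
    have z0: "\<forall>s\<in>{t k..t (Suc k)}. 0 \<in> tE (info k i) s"
      using conjunct1[OF conjunct2[OF rt[unfolded rci_tube_def]]] by blast
    have s1: "\<forall>s\<in>{t k..t (Suc k)}. tube (com k) s \<subseteq> S s"
    proof
      fix s assume s: "s \<in> {t k..t (Suc k)}"
      have "tube (info k i) s \<subseteq> mink_diff (S s) (tE (info k i) s)" using tsub s by blast
      also have "\<dots> \<subseteq> S s" using mink_diff_sub z0 s by blast
      finally show "tube (com k) s \<subseteq> S s" using ci by simp
    qed
    have s2: "g k integrable_on {t k..t (Suc k)}"
    proof -
      have "\<forall>i\<in>{1..N k}. (\<lambda>s. l (tx (info k i) s) (tu (info k i) s)) integrable_on {t k..t k + real i * Tc}"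
        using integrable_info kK by blast
      then have "(\<lambda>s. l (tx (info k i) s) (tu (info k i) s)) integrable_on {t k..t k + real i * Tc}"
        using iN by blast
      then show ?thesis unfolding g_def ci tS .
    qed
    have ib: "gb k integrable_on {t k..tf}" using integrable_bak kK unfolding gb_def by auto
    have comb: "integral {t k..t (Suc k)} (gb k) + integral {t (Suc k)..tf} (gb k) = integral {t k..tf} (gb k)"
      using Henstock_Kurzweil_Integration.integral_combine[OF le ib] .
    have "E k + integral {t k..t (Suc k)} (g k) + Jb k (t (Suc k))
        = E k + traj_cost l lT tf (t k) tf (tx (bak k)) (tu (bak k))
            + delta_cost l lT tf (t k) (real i * Tc) (info k i) (bak k)"
      unfolding Jb_eq delta_cost_def traj_cost_def tS[symmetric]
      using eqx ci comb unfolding g_def gb_def by (cases "t (Suc k) = tf") (simp_all add: algebra_simps)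
    then show ?thesis using bud s1 s2 eqx ci by simp
  qed
  have fint: "f integrable_on {t k..t (Suc k)} \<and> integral {t k..t (Suc k)} f = integral {t k..t (Suc k)} (g k)"
    if kK: "k < K" for k
  proof -
    have eq: "g k s = f s" if "s \<in> {t k..t (Suc k)} - {t (Suc k)}" for s
    proof -
      have "seg_index t K s = k" using seg_eq[OF m kK] that by auto
      then show ?thesis unfolding f_def g_def sol_x_def sol_u_def by simp
    qed
    have "f integrable_on {t k..t (Suc k)}"
    proof (rule integrable_spike_finite[where S="{t (Suc k)}" and f="g k"])
      show "f x = g k x" if "x \<in> {t k..t (Suc k)} - {t (Suc k)}" for x using eq[OF that] by simp
    qed (use piece[OF kK] in auto)
    moreover have "integral {t k..t (Suc k)} f = integral {t k..t (Suc k)} (g k)"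
      by (rule integral_spike[of "{t (Suc k)}"]) (use eq in auto)
    ultimately show ?thesis by simp
  qed
  have Eint: "k \<le> K \<longrightarrow> f integrable_on {t0..t k}" for k
  proof (induction k)
    case 0 then show ?case using times(1) integrable_on_refl[of f t0] by simp
  next
    case (Suc k)
    show ?case
    proof
      assume "Suc k \<le> K"
      then have kK: "k < K" by simp
      show "f integrable_on {t0..t (Suc k)}"
      proof (rule Henstock_Kurzweil_Integration.integrable_combine[of t0 "t k"])
        show "t0 \<le> t k" using tk_ge kK by simp
        show "t k \<le> t (Suc k)" using m kK by (simp add: less_imp_le)
        show "f integrable_on {t0..t k}" using Suc.IH kK by simp
        show "f integrable_on {t k..t (Suc k)}" using fint[OF kK] by simp
      qed
    qed
  qed
  have Estep: "E (Suc k) = E k + integral {t k..t (Suc k)} (g k)" if kK: "k < K" for k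
  proof -
    have "f integrable_on {t0..t (Suc k)}" using Eint[of "Suc k"] kK by simp
    then have "integral {t0..t k} f + integral {t k..t (Suc k)} f = integral {t0..t (Suc k)} f"
      by (intro Henstock_Kurzweil_Integration.integral_combine) (use tk_ge kK m in \<open>auto simp: less_imp_le\<close>)
    then show ?thesis unfolding E_eq using fint[OF kK] by simp
  qed
  have inv: "k < K \<longrightarrow> E k + Jb k (t k) \<le> B" for k
  proof (induction k)
    case 0
    have "E 0 = 0" unfolding E_eq times(1) by simp
    then show ?case using backup0_budget times(1) unfolding Jb_def by simp
  next
    case (Suc k)
    show ?case
    proof
      assume sK: "Suc k < K"
      then have "E (Suc k) + Jb k (t (Suc k)) \<le> B"
        using piece[of k] Suc Estep[of k] by simp
      moreover have "Jb (Suc k) (t (Suc k)) \<le> Jb k (t (Suc k))"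
        using cost_mono sK unfolding Jb_def by simp
      ultimately show "E (Suc k) + Jb (Suc k) (t (Suc k)) \<le> B" by simp
    qed
  qed
  define k1 where "k1 = K - 1"
  have k1: "k1 < K" "Suc k1 = K" using K0 unfolding k1_def by auto
  have fin: "E K + Jb k1 tf \<le> B"
    using inv[of k1] piece[OF k1(1)] Estep[OF k1(1)] k1 times(2) by simp
  have segK: "seg_index t K tf = k1" unfolding seg_index_def k1_def times(2)[symmetric] by simp
  have "traj_cost l lT tf t0 tf (sol_x com t K) (sol_u com t K) = E K + lT (tx (com k1) tf)"
    unfolding traj_cost_def E_eq times(2) f_def sol_x_def segK by simp
  also have "\<dots> = E K + Jb k1 tf"
    using piece[OF k1(1)] k1 times(2) unfolding Jb_eq by simp
  finally have cost: "traj_cost l lT tf t0 tf (sol_x com t K) (sol_u com t K) \<le> B" using fin by simp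
  have safe: "\<forall>s\<in>{t0..tf}. sol_tube com t K s \<subseteq> S s"
  proof
    fix s assume s: "s \<in> {t0..tf}"
    then obtain k where "k<K" "t k \<le> s" "s \<le> t (Suc k)" "seg_index t K s = k"
      using seg_cover[OF m, of s] times K0 by auto
    then show "sol_tube com t K s \<subseteq> S s" unfolding sol_tube_def using piece by auto
  qed
  show ?thesis using safe cost by simp
qed

end
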